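(* For every regular command $\mathsf{r}$ and all $P,Q\subseteq\Sigma$, the SIL triple $\langle P\rangle\,\mathsf{r}\,\langle Q\rangle$ is derivable in the SIL proof system if and only if it is valid, i.e. if and only if $\overleftarrow{[\![\mathsf{r}]\!]}Q\supseteq P$.
   Context: $\mathrm{Var}$ is a finite set of variables and $\Sigma=\mathrm{Var}\to\mathbb{Z}$ is the set of states. Regular commands: atomic commands $\mathsf{c}::=\mathtt{skip}\mid x:=a\mid b?$ (integer arithmetic expression $a$, Boolean expression $b$, evaluated as usual) and $\mathsf{r}::=\mathsf{c}\mid \mathsf{r};\mathsf{r}\mid\mathsf{r}\boxplus\mathsf{r}\mid\mathsf{r}^*$. For $S\subseteq\Sigma$: $[\![\mathtt{skip}]\!]S=S$, $[\![x:=a]\!]S=\{\sigma[x\mapsto[\![a]\!]\sigma]\mid\sigma\in S\}$, $[\![b?]\!]S=\{\sigma\in S\mid[\![b]\!]\sigma=\mathrm{true}\}$. Forward collecting semantics: $\overrightarrow{[\![\mathsf{c}]\!]}S=[\![\mathsf{c}]\!]S$, $\overrightarrow{[\![\mathsf{r}_1;\mathsf{r}_2]\!]}S=\overrightarrow{[\![\mathsf{r}_2]\!]}(\overrightarrow{[\![\mathsf{r}_1]\!]}S)$, $\overrightarrow{[\![\mathsf{r}_1\boxplus\mathsf{r}_2]\!]}S=\overrightarrow{[\![\mathsf{r}_1]\!]}S\cup\overrightarrow{[\![\mathsf{r}_2]\!]}S$, $\overrightarrow{[\![\mathsf{r}^*]\!]}S=\bigcup_{n\ge0}\overrightarrow{[\![\mathsf{r}]\!]}^nS$.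 Backward semantics: $\overleftarrow{[\![\mathsf{r}]\!]}\sigma'=\{\sigma\mid\sigma'\in\overrightarrow{[\![\mathsf{r}]\!]}\{\sigma\}\}$, lifted to sets by union. The SIL proof system derives triples $\langle P\rangle\,\mathsf{r}\,\langle Q\rangle$ ($P,Q\subseteq\Sigma$) with exactly the following rules: (atom) $\langle\overleftarrow{[\![\mathsf{c}]\!]}Q\rangle\,\mathsf{c}\,\langle Q\rangle$ for every atomic $\mathsf{c}$ and $Q$; (cons) from $P\subseteq P'$, $\langle P'\rangle\,\mathsf{r}\,\langle Q'\rangle$, $Q'\subseteq Q$ derive $\langle P\rangle\,\mathsf{r}\,\langle Q\rangle$; (seq) from $\langle P\rangle\,\mathsf{r}_1\,\langle R\rangle$ and $\langle R\rangle\,\mathsf{r}_2\,\langle Q\rangle$ derive $\langle P\rangle\,\mathsf{r}_1;\mathsf{r}_2\,\langle Q\rangle$; (choice) from $\langle P_1\rangle\,\mathsf{r}_1\,\langle Q\rangle$ and $\langle P_2\rangle\,\mathsf{r}_2\,\langle Q\rangle$ derive $\langle P_1\cup P_2\rangle\,\mathsf{r}_1\boxplus\mathsf{r}_2\,\langle Q\rangle$; (iter) from $\langle Q_{n+1}\rangle\,\mathsf{r}\,\langle Q_n\rangle$ for all $n\ge0$ (infinitely many premises) derive $\langle\bigcup_{n\ge0}Q_n\rangle\,\mathsf{r}^*\,\langle Q_0\rangle$. Derivations may be infinitely branching but are well-founded. *)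

theory Defs
  imports Main
begin

(* Variables: a finite type 'v (Var is a finite set); states: 'v \<Rightarrow> int *)
type_synonym 'v state = "'v \<Rightarrow> int"

datatype 'v aexp = N int | V 'v | Plus "'v aexp" "'v aexp" | Minus "'v aexp" "'v aexp"
  | Times "'v aexp" "'v aexp" | Div "'v aexp" "'v aexp" | Mod "'v aexp" "'v aexp"

fun aval :: "'v aexp \<Rightarrow> 'v state \<Rightarrow> int" where
  "aval (N n) s = n"
| "aval (V x) s = s x"
| "aval (Plus a b) s = aval a s + aval b s"
| "aval (Minus a b) s = aval a s - aval b s"
| "aval (Times a b) s = aval a s * aval b s"
| "aval (Div a b) s = aval a s div aval b s"
| "aval (Mod a b) s = aval a s mod aval b s"

datatype 'v bexp = Bc bool | Not "'v bexp" | And "'v bexp" "'v bexp" | Or "'v bexp" "'v bexp"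
  | Less "'v aexp" "'v aexp" | Leq "'v aexp" "'v aexp" | Eq "'v aexp" "'v aexp"

fun bval :: "'v bexp \<Rightarrow> 'v state \<Rightarrow> bool" where
  "bval (Bc v) s = v"
| "bval (Not b) s = (\<not> bval b s)"
| "bval (And b c) s = (bval b s \<and> bval c s)"
| "bval (Or b c) s = (bval b s \<or> bval c s)"
| "bval (Less a b) s = (aval a s < aval b s)"
| "bval (Leq a b) s = (aval a s \<le> aval b s)"
| "bval (Eq a b) s = (aval a s = aval b s)"

datatype 'v atom = Skip | Assign 'v "'v aexp" | Assume "'v bexp"

datatype 'v rcmd = Atom "'v atom" | Seq "'v rcmd" "'v rcmd" | Choice "'v rcmd" "'v rcmd"
  | Star "'v rcmd"

fun asem :: "'v atom \<Rightarrow> 'v state set \<Rightarrow> 'v state set" where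
  "asem Skip S = S"
| "asem (Assign x a) S = {\<sigma>(x := aval a \<sigma>) | \<sigma>. \<sigma> \<in> S}"
| "asem (Assume b) S = {\<sigma> \<in> S. bval b \<sigma>}"

fun fwd :: "'v rcmd \<Rightarrow> 'v state set \<Rightarrow> 'v state set" where
  "fwd (Atom c) S = asem c S"
| "fwd (Seq r1 r2) S = fwd r2 (fwd r1 S)"
| "fwd (Choice r1 r2) S = fwd r1 S \<union> fwd r2 S"
| "fwd (Star r) S = (\<Union>n. (fwd r ^^ n) S)"

definition bwd_atom :: "'v atom \<Rightarrow> 'v state set \<Rightarrow> 'v state set" where
  "bwd_atom c Q = {\<sigma>. \<exists>\<sigma>'\<in>Q. \<sigma>' \<in> asem c {\<sigma>}}"

definition bwd :: "'v rcmd \<Rightarrow> 'v state set \<Rightarrow> 'v state set" where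
  "bwd r Q = {\<sigma>. \<exists>\<sigma>'\<in>Q. \<sigma>' \<in> fwd r {\<sigma>}}"

inductive sil :: "'v state set \<Rightarrow> 'v rcmd \<Rightarrow> 'v state set \<Rightarrow> bool" where
  atom: "sil (bwd_atom c Q) (Atom c) Q"
| cons: "P \<subseteq> P' \<Longrightarrow> sil P' r Q' \<Longrightarrow> Q' \<subseteq> Q \<Longrightarrow> sil P r Q"
| seq: "sil P r1 R \<Longrightarrow> sil R r2 Q \<Longrightarrow> sil P (Seq r1 r2) Q"
| choice: "sil P1 r1 Q \<Longrightarrow> sil P2 r2 Q \<Longrightarrow> sil (P1 \<union> P2) (Choice r1 r2) Q"
| iter: "(\<And>n. sil (Qs (Suc n)) r (Qs n)) \<Longrightarrow> sil (\<Union>n. Qs n) (Star r) (Qs 0)"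

end

theory Submission
  imports Defs
begin

lemma pow_add:
  fixes f :: "'a set \<Rightarrow> 'a set"
  assumes A: "\<And>S. f S = (\<Union>\<sigma>\<in>S. f {\<sigma>})"
  shows "(f ^^ n) S = (\<Union>\<sigma>\<in>S. (f ^^ n) {\<sigma>})"
proof (induction n arbitrary: S)
  case 0 show ?case unfolding funpow_0 by blast
next
  case (Suc n)
  have "(f ^^ Suc n) S = f ((f ^^ n) S)" by simp
  also have "\<dots> = f (\<Union>\<sigma>\<in>S. (f ^^ n) {\<sigma>})" using Suc.IH[of S] by (rule arg_cong)
  also have "\<dots> = (\<Union>\<tau>\<in>(\<Union>\<sigma>\<in>S. (f ^^ n) {\<sigma>}). f {\<tau>})" by (rule A)
  also have "\<dots> = (\<Union>\<sigma>\<in>S. (\<Union>\<tau>\<in>(f ^^ n) {\<sigma>}. f {\<tau>}))" by blast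
  also have "\<dots> = (\<Union>\<sigma>\<in>S. (f ^^ Suc n) {\<sigma>})"
  proof (rule SUP_cong[OF refl])
    fix \<sigma> show "(\<Union>\<tau>\<in>(f ^^ n) {\<sigma>}. f {\<tau>}) = (f ^^ Suc n) {\<sigma>}"
      using A[of "(f ^^ n) {\<sigma>}"] by simp
  qed
  finally show ?case .
qed

lemma asem_add: "asem c S = (\<Union>\<sigma>\<in>S. asem c {\<sigma>})"
  by (cases c) (simp_all, blast+)

lemma fwd_add: "fwd r S = (\<Union>\<sigma>\<in>S. fwd r {\<sigma>})"
proof (induction r arbitrary: S)
  case (Atom c) show ?case unfolding fwd.simps by (rule asem_add)
next
  case (Seq r1 r2)
  have "fwd (Seq r1 r2) S = fwd r2 (fwd r1 S)" by simp
  also have "\<dots> = fwd r2 (\<Union>\<sigma>\<in>S. fwd r1 {\<sigma>})" using Seq.IH(1)[of S] by (rule arg_cong)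
  also have "\<dots> = (\<Union>\<tau>\<in>(\<Union>\<sigma>\<in>S. fwd r1 {\<sigma>}). fwd r2 {\<tau>})" by (rule Seq.IH(2))
  also have "\<dots> = (\<Union>\<sigma>\<in>S. (\<Union>\<tau>\<in>fwd r1 {\<sigma>}. fwd r2 {\<tau>}))" by blast
  also have "\<dots> = (\<Union>\<sigma>\<in>S. fwd (Seq r1 r2) {\<sigma>})"
  proof (rule SUP_cong[OF refl])
    fix \<sigma> show "(\<Union>\<tau>\<in>fwd r1 {\<sigma>}. fwd r2 {\<tau>}) = fwd (Seq r1 r2) {\<sigma>}"
      using Seq.IH(2)[of "fwd r1 {\<sigma>}"] by simp
  qed
  finally show ?case .
next
  case (Choice r1 r2)
  have "fwd (Choice r1 r2) S = fwd r1 S \<union> fwd r2 S" by simp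
  also have "\<dots> = (\<Union>\<sigma>\<in>S. fwd r1 {\<sigma>}) \<union> (\<Union>\<sigma>\<in>S. fwd r2 {\<sigma>})"
    using Choice.IH(1)[of S] Choice.IH(2)[of S] by (rule arg_cong2)
  also have "\<dots> = (\<Union>\<sigma>\<in>S. fwd (Choice r1 r2) {\<sigma>})" by simp blast
  finally show ?case .
next
  case (Star r)
  have P: "(fwd r ^^ n) S = (\<Union>\<sigma>\<in>S. (fwd r ^^ n) {\<sigma>})" for n
    by (rule pow_add) (rule Star.IH)
  have "fwd (Star r) S = (\<Union>n. (fwd r ^^ n) S)" by simp
  also have "\<dots> = (\<Union>n. (\<Union>\<sigma>\<in>S. (fwd r ^^ n) {\<sigma>}))" by (rule SUP_cong[OF refl], rule P)
  also have "\<dots> = (\<Union>\<sigma>\<in>S. fwd (Star r) {\<sigma>})" by simp blast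
  finally show ?case .
qed

lemma fwd_mono: "S \<subseteq> T \<Longrightarrow> fwd r S \<subseteq> fwd r T"
  by (subst (1 2) fwd_add) blast

lemma pow_mono: "S \<subseteq> T \<Longrightarrow> (fwd r ^^ n) S \<subseteq> (fwd r ^^ n) T"
  by (induction n) (auto dest: fwd_mono[of _ _ r])

lemma bwd_atom_eq: "bwd (Atom c) Q = bwd_atom c Q"
  by (simp add: bwd_def bwd_atom_def)

lemma sound: "sil P r Q \<Longrightarrow> P \<subseteq> bwd r Q"
proof (induction rule: sil.induct)
  case (atom c Q) then show ?case by (simp add: bwd_atom_eq)
next
  case (cons P P' r Q' Q) then show ?case unfolding bwd_def by blast
next
  case (seq P r1 R r2 Q)
  show ?case
  proof
    fix \<sigma> assume "\<sigma> \<in> P"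
    then obtain \<tau> where t: "\<tau> \<in> R" "\<tau> \<in> fwd r1 {\<sigma>}" using seq.IH(1) unfolding bwd_def by blast
    then obtain \<rho> where "\<rho> \<in> Q" "\<rho> \<in> fwd r2 {\<tau>}" using seq.IH(2) unfolding bwd_def by blast
    moreover have "fwd r2 {\<tau>} \<subseteq> fwd r2 (fwd r1 {\<sigma>})" by (rule fwd_mono) (simp add: t)
    ultimately show "\<sigma> \<in> bwd (Seq r1 r2) Q" by (auto simp: bwd_def)
  qed
next
  case (choice P1 r1 Q P2 r2) then show ?case by (auto simp: bwd_def)
next
  case (iter Qs r)
  have "\<forall>\<sigma>\<in>Qs n. \<exists>m. \<exists>\<sigma>'\<in>Qs 0. \<sigma>' \<in> (fwd r ^^ m) {\<sigma>}" for n
  proof (induction n)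
    case 0 show ?case
    proof
      fix \<sigma> assume "\<sigma> \<in> Qs 0"
      moreover have "\<sigma> \<in> (fwd r ^^ 0) {\<sigma>}" by simp
      ultimately show "\<exists>m. \<exists>\<sigma>'\<in>Qs 0. \<sigma>' \<in> (fwd r ^^ m) {\<sigma>}" by blast
    qed
  next
    case (Suc n)
    show ?case
    proof
      fix \<sigma> assume "\<sigma> \<in> Qs (Suc n)"
      then obtain \<tau> where t: "\<tau> \<in> Qs n" "\<tau> \<in> fwd r {\<sigma>}" using iter(2)[of n] unfolding bwd_def by blast
      then obtain m \<sigma>' where s: "\<sigma>' \<in> Qs 0" "\<sigma>' \<in> (fwd r ^^ m) {\<tau>}" using Suc by blast
      have "(fwd r ^^ m) {\<tau>} \<subseteq> (fwd r ^^ m) (fwd r {\<sigma>})" by (rule pow_mono) (simp add: t)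
      also have "\<dots> = (fwd r ^^ Suc m) {\<sigma>}" by (simp only: funpow_Suc_right comp_def)
      finally show "\<exists>m. \<exists>\<sigma>'\<in>Qs 0. \<sigma>' \<in> (fwd r ^^ m) {\<sigma>}" using s by blast
    qed
  qed
  then have H: "\<And>n \<sigma>. \<sigma> \<in> Qs n \<Longrightarrow> \<exists>m. \<exists>\<sigma>'\<in>Qs 0. \<sigma>' \<in> (fwd r ^^ m) {\<sigma>}" by blast
  show ?case
  proof
    fix \<sigma> assume "\<sigma> \<in> (\<Union>n. Qs n)"
    then obtain n where "\<sigma> \<in> Qs n" by blast
    then obtain m \<sigma>' where "\<sigma>' \<in> Qs 0" "\<sigma>' \<in> (fwd r ^^ m) {\<sigma>}" using H by blast
    then show "\<sigma> \<in> bwd (Star r) (Qs 0)" unfolding bwd_def fwd.simps by blast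
  qed
qed

lemma complete: "sil (bwd r Q) r Q"
proof (induction r arbitrary: Q)
  case (Atom c) show ?case unfolding bwd_atom_eq by (rule sil.atom)
next
  case (Seq r1 r2)
  have S: "bwd (Seq r1 r2) Q \<subseteq> bwd r1 (bwd r2 Q)"
  proof
    fix \<sigma> assume "\<sigma> \<in> bwd (Seq r1 r2) Q"
    then obtain \<rho> where r: "\<rho> \<in> Q" "\<rho> \<in> fwd r2 (fwd r1 {\<sigma>})" by (auto simp: bwd_def)
    then obtain \<tau> where "\<tau> \<in> fwd r1 {\<sigma>}" "\<rho> \<in> fwd r2 {\<tau>}" using fwd_add[of r2 "fwd r1 {\<sigma>}"] by auto
    then show "\<sigma> \<in> bwd r1 (bwd r2 Q)" using r by (auto simp: bwd_def)
  qed
  have "sil (bwd r1 (bwd r2 Q)) (Seq r1 r2) Q" by (rule sil.seq[OF Seq.IH(1) Seq.IH(2)])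
  then show ?case by (rule sil.cons[OF S _ order_refl])
next
  case (Choice r1 r2)
  have S: "bwd (Choice r1 r2) Q \<subseteq> bwd r1 Q \<union> bwd r2 Q" by (auto simp: bwd_def)
  have "sil (bwd r1 Q \<union> bwd r2 Q) (Choice r1 r2) Q" by (rule sil.choice[OF Choice.IH(1) Choice.IH(2)])
  then show ?case by (rule sil.cons[OF S _ order_refl])
next
  case (Star r)
  define Qs where "Qs n = {\<sigma>. \<exists>\<sigma>'\<in>Q. \<sigma>' \<in> (fwd r ^^ n) {\<sigma>}}" for n
  have Q0: "Qs 0 = Q" by (auto simp: Qs_def)
  have "sil (Qs (Suc n)) r (Qs n)" for n
  proof -
    have "Qs (Suc n) \<subseteq> bwd r (Qs n)"
    proof
      fix \<sigma> assume "\<sigma> \<in> Qs (Suc n)"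
      moreover have "(fwd r ^^ Suc n) {\<sigma>} = (fwd r ^^ n) (fwd r {\<sigma>})"
        by (simp only: funpow_Suc_right comp_def)
      ultimately obtain \<rho> where r: "\<rho> \<in> Q" "\<rho> \<in> (fwd r ^^ n) (fwd r {\<sigma>})"
        unfolding Qs_def by auto
      then obtain \<tau> where "\<tau> \<in> fwd r {\<sigma>}" "\<rho> \<in> (fwd r ^^ n) {\<tau>}"
        using pow_add[of "fwd r" n "fwd r {\<sigma>}", OF fwd_add] by auto
      then show "\<sigma> \<in> bwd r (Qs n)" using r by (auto simp: bwd_def Qs_def)
    qed
    then show ?thesis by (rule sil.cons[OF _ Star.IH order_refl])
  qed
  then have "sil (\<Union>n. Qs n) (Star r) (Qs 0)" by (rule sil.iter)
  have "bwd (Star r) Q \<subseteq> (\<Union>n. Qs n)" by (auto simp: bwd_def Qs_def)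
  then show ?case using sil.cons[OF _ \<open>sil (\<Union>n. Qs n) (Star r) (Qs 0)\<close>, of "bwd (Star r) Q" Q] unfolding Q0 by blast
qed

theorem mainTheorem3:
  fixes r :: "('v::finite) rcmd" and P Q :: "'v state set"
  shows "sil P r Q \<longleftrightarrow> P \<subseteq> bwd r Q"
proof
  assume "sil P r Q" then show "P \<subseteq> bwd r Q" by (rule sound)
next
  assume "P \<subseteq> bwd r Q"
  then show "sil P r Q" by (rule sil.cons[OF _ complete order_refl])
qed

end
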